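(* Let $b,m>1$ be integers with $\gcd(b,m)=1$, and let $\frac{1}{m}=(0.\,a_1a_2\cdots a_i\cdots)_b$ be the base-$b$ expansion of $\frac1m$ (so $\frac1m=\sum_{i\ge1}a_ib^{-i}$ with digits $a_i\in\{0,\dots,b-1\}$). Then for every positive integer $t$, the base-$(b+mt)$ expansion of $\frac1m$ is \[ \tfrac{1}{m}=(0.\,a'_1a'_2\cdots a'_i\cdots)_{b+mt}, \] where for each $i\ge1$, $a'_i=a_i+t\,k_i$ with $k_i=(b^{i-1}\bmod m)$.
   Context: For integers $x$ and $m>0$, $x \bmod m$ denotes the least nonnegative residue of $x$ modulo $m$. The notation $(0.\,c_1c_2\cdots)_B$ denotes the number $\sum_{i\ge1}c_iB^{-i}$ with digits $c_i\in\{0,\dots,B-1\}$. *)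

theory Defs
  imports Complex_Main
begin

definition is_base_expansion :: "nat \<Rightarrow> (nat \<Rightarrow> nat) \<Rightarrow> real \<Rightarrow> bool" where
  "is_base_expansion B c x \<longleftrightarrow>
     (\<forall>i\<ge>1. c i < B) \<and> (\<lambda>n. real (c (Suc n)) / real B ^ Suc n) sums x"

end

theory Submission
  imports Defs
begin

lemma greedy_partial:
  fixes B m :: nat
  assumes "B > 0" "m > 1"
  shows "(\<Sum>k<n. real ((B * (B^k mod m)) div m) / real B ^ Suc k)
         = 1 / real m - real (B^n mod m) / (real m * real B ^ n)"
proof (induction n)
  case 0
  then show ?case using assms by simp
next
  case (Suc n)
  let ?r = "B^n mod m"
  have e: "B * ?r = m * ((B * ?r) div m) + B^(Suc n) mod m"
    by (metis mod_mult_right_eq mult.commute mult_div_mod_eq power_Suc)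
  have e': "real B * real ?r = real m * real ((B * ?r) div m) + real (B^(Suc n) mod m)"
    using arg_cong[OF e, of real] by simp
  have "real ((B * ?r) div m) / real B ^ Suc n
        = real (B^n mod m) / (real m * real B ^ n) - real (B^Suc n mod m) / (real m * real B ^ Suc n)"
    using assms e' by (simp add: field_simps)
  then show ?case using Suc by simp
qed

lemma greedy_sums:
  fixes B m :: nat
  assumes "B > 1" "m > 1"
  shows "(\<lambda>k. real ((B * (B^k mod m)) div m) / real B ^ Suc k) sums (1 / real m)"
proof -
  have lim0: "(\<lambda>n. real (B^n mod m) / (real m * real B ^ n)) \<longlonglongrightarrow> 0"
  proof (rule tendsto_sandwich[OF _ _ tendsto_const LIMSEQ_realpow_zero[of "1 / real B"]])
    show "\<forall>\<^sub>F n in sequentially. 0 \<le> real (B^n mod m) / (real m * real B ^ n)"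
      by (rule always_eventually) simp
    show "\<forall>\<^sub>F n in sequentially. (real (B^n mod m) / (real m * real B ^ n)) \<le> (1 / real B) ^ n"
    proof (rule always_eventually, rule allI)
      fix n
      have "real (B^n mod m) \<le> real m" using assms by simp
      then have "real (B^n mod m) / (real m * real B ^ n) \<le> real m / (real m * real B ^ n)"
        using assms by (intro divide_right_mono) auto
      also have "\<dots> = (1 / real B) ^ n" using assms by (simp add: power_one_over)
      finally show "(real (B^n mod m) / (real m * real B ^ n)) \<le> (1 / real B) ^ n" by simp
    qed
  qed (use assms in auto)
  have "(\<lambda>n. 1 / real m - real (B^n mod m) / (real m * real B ^ n)) \<longlonglongrightarrow> 1 / real m - 0"
    by (intro tendsto_diff tendsto_const lim0)
  then show ?thesis unfolding sums_def using greedy_partial[of B m] assms by simp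
qed

fun NN :: "nat \<Rightarrow> (nat \<Rightarrow> nat) \<Rightarrow> nat \<Rightarrow> nat" where
  "NN b a 0 = 0"
| "NN b a (Suc n) = b * NN b a n + a (Suc n)"

lemma NN_real:
  assumes "b > 0"
  shows "real (NN b a n) = real b ^ n * (\<Sum>k<n. real (a (Suc k)) / real b ^ Suc k)"
  by (induction n) (use assms in \<open>simp_all add: field_simps\<close>)

lemma uniq:
  fixes b m :: nat and a :: "nat \<Rightarrow> nat"
  assumes "b > 1" and "m > 1" and "coprime b m"
    and "is_base_expansion b a (1 / real m)"
  shows "a (Suc n) = (b * (b^n mod m)) div m"
proof -
  let ?f = "\<lambda>k. real (a (Suc k)) / real b ^ Suc k"
  have dig: "\<And>i. i \<ge> 1 \<Longrightarrow> a i < b" and S: "?f sums (1 / real m)"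
    using assms(4) unfolding is_base_expansion_def by auto
  have key: "NN b a n = b^n div m" for n
  proof -
    have T: "(\<lambda>k. ?f (k + n)) sums (1 / real m - sum ?f {..<n})"
      using sums_split_initial_segment[OF S] .
    have lo: "0 \<le> 1 / real m - sum ?f {..<n}"
      by (rule sums_le[OF _ sums_zero T]) (use assms(1) in auto)
    have G: "(\<lambda>k. (real b - 1) / real b ^ Suc n * (1 / real b) ^ k) sums
             ((real b - 1) / real b ^ Suc n * (1 / (1 - 1 / real b)))"
      using assms(1) by (intro sums_mult geometric_sums) auto
    have gv: "(real b - 1) / real b ^ Suc n * (1 / (1 - 1 / real b)) = 1 / real b ^ n"
      using assms(1) by (simp add: field_simps)
    have hi: "1 / real m - sum ?f {..<n} \<le> 1 / real b ^ n"
    proof (rule sums_le[OF _ T G[unfolded gv]])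
      fix k
      show "?f (k + n) \<le> (real b - 1) / real b ^ Suc n * (1 / real b) ^ k"
      proof -
        have "a (Suc (k + n)) \<le> b - 1" using dig[of "Suc (k+n)"] by simp
        then have "real (a (Suc (k + n))) \<le> real b - 1" using assms(1) by linarith
        then have "real (a (Suc (k + n))) / real b ^ Suc (k + n) \<le> (real b - 1) / real b ^ Suc (k + n)"
          using assms(1) by (intro divide_right_mono) auto
        also have "\<dots> = (real b - 1) / real b ^ Suc n * (1 / real b) ^ k"
          using assms(1) by (simp add: power_add power_one_over field_simps)
        finally show "?f (k + n) \<le> (real b - 1) / real b ^ Suc n * (1 / real b) ^ k" by simp
      qed
    qed
    have NR: "real (NN b a n) = real b ^ n * sum ?f {..<n}" using NN_real assms(1) by simp
    have bp: "real b ^ n > 0" using assms(1) by simp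
    have lo2: "real m * real (NN b a n) \<le> real b ^ n"
    proof -
      have "sum ?f {..<n} \<le> 1 / real m" using lo by simp
      then have "real b ^ n * sum ?f {..<n} \<le> real b ^ n * (1 / real m)"
        using bp by (intro mult_left_mono) auto
      then show ?thesis using NR assms(2) by (simp add: field_simps)
    qed
    have hi2: "real b ^ n \<le> real m * real (NN b a n) + real m"
    proof -
      have "1 / real m \<le> sum ?f {..<n} + 1 / real b ^ n" using hi by simp
      then have "real b ^ n * (1 / real m) \<le> real b ^ n * (sum ?f {..<n} + 1 / real b ^ n)"
        using bp by (intro mult_left_mono) auto
      moreover have "real b ^ n * (sum ?f {..<n} + 1 / real b ^ n) = real (NN b a n) + 1"
        using NR bp by (simp add: distrib_left)
      ultimately have "real b ^ n / real m \<le> real (NN b a n) + 1" by simp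
      then show ?thesis using assms(2) by (simp add: field_simps)
    qed
    have l: "m * NN b a n \<le> b^n" using lo2 by (metis of_nat_le_iff of_nat_mult of_nat_power)
    have h: "b^n \<le> m * NN b a n + m" using hi2
      by (metis of_nat_add of_nat_le_iff of_nat_mult of_nat_power)
    have nd: "\<not> m dvd b^n"
    proof
      assume "m dvd b^n"
      moreover have "coprime (b^n) m" using assms(3) by simp
      ultimately have "is_unit m" by (meson coprime_absorb_right coprime_commute)
      then show False using assms(2) by simp
    qed
    have l': "m * NN b a n < b^n" using l nd by (metis dvd_triv_left le_neq_implies_less)
    have h': "b^n < m * NN b a n + m"
    proof -
      have "b^n \<noteq> m * (NN b a n + 1)" using nd by (metis dvd_triv_left)
      then show ?thesis using h by (simp add: algebra_simps)
    qed
    show ?thesis using l' h' assms(2)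
      by (metis add.commute div_nat_eqI le_eq_less_or_eq mult_Suc_right)
  qed
  have "a (Suc n) = NN b a (Suc n) - b * NN b a n" by simp
  also have "\<dots> = b^(Suc n) div m - b * (b^n div m)" using key by metis
  also have "\<dots> = (b * (b^n mod m)) div m"
  proof -
    have "b^(Suc n) = m * (b * (b^n div m)) + b * (b^n mod m)"
      by (metis add_mult_distrib2 mult.left_commute mult_div_mod_eq power_Suc)
    then have "b^(Suc n) div m = b * (b^n div m) + (b * (b^n mod m)) div m"
      using assms(2) by simp
    then show ?thesis by simp
  qed
  finally show ?thesis .
qed

theorem theorem1:
  fixes b m :: nat and a :: "nat \<Rightarrow> nat"
  assumes "b > 1" and "m > 1" and "coprime b m"
    and "is_base_expansion b a (1 / real m)"
  shows "\<forall>t::nat. t > 0 \<longrightarrow>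
           is_base_expansion (b + m * t) (\<lambda>i. a i + t * (b ^ (i - 1) mod m)) (1 / real m)"
proof (intro allI impI)
  fix t :: nat assume "t > 0"
  define B where "B = b + m * t"
  have B1: "B > 1" using assms(1) by (simp add: B_def)
  have c: "a (Suc n) + t * (b ^ n mod m) = (B * (B^n mod m)) div m" for n
  proof -
    have r: "B^n mod m = b^n mod m"
      unfolding B_def by (metis mod_mult_self2 power_mod)
    have "(B * (b^n mod m)) div m = (b * (b^n mod m) + m * (t * (b^n mod m))) div m"
      unfolding B_def by (simp add: algebra_simps)
    also have "\<dots> = (b * (b^n mod m)) div m + t * (b^n mod m)"
      using assms(2) by simp
    finally show ?thesis using r uniq[OF assms] by simp
  qed
  show "is_base_expansion B (\<lambda>i. a i + t * (b ^ (i - 1) mod m)) (1 / real m)"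
    unfolding is_base_expansion_def
  proof
    show "\<forall>i\<ge>1. a i + t * (b ^ (i - 1) mod m) < B"
    proof (intro allI impI)
      fix i :: nat assume "i \<ge> 1"
      then obtain n where i: "i = Suc n" by (cases i) auto
      have "B^n mod m < m" using assms(2) by simp
      then have "B * (B^n mod m) < B * m" using B1 by simp
      then have "(B * (B^n mod m)) div m < B" by (simp add: div_less_iff_less_mult)
      then show "a i + t * (b ^ (i - 1) mod m) < B" using c i by simp
    qed
    show "(\<lambda>n. real (a (Suc n) + t * (b ^ (Suc n - 1) mod m)) / real B ^ Suc n) sums (1 / real m)"
      using greedy_sums[OF B1, of m] assms(2) c by simp
  qed
qed

end
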